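(* Let $q$ be a prime power. Let $C_1=[n,k_1,d_1]_q$, $C_2=[n,k_2,d_2]_q$ be linear codes over $\mathbb{F}_q$ with $C_2\subset C_1$ (giving via CSS an asymmetric stabilizer code $[[n,k^{*},d_z^{*}/d_x^{*}]]_q$, $k^{*}=k_1-k_2$, $d_z^{*}\geq d_1$, $d_x^{*}\geq d_2^{\perp}$), and let $C_3=[n,k_3,d_3]_q$, $C_4=[n,k_4,d_4]_q$ be linear codes over $\mathbb{F}_q$ with $C_4\subset C_3$ (giving an asymmetric stabilizer code $[[n,k^{\diamond},d_z^{\diamond}/d_x^{\diamond}]]_q$, $k^{\diamond}=k_3-k_4$, $d_z^{\diamond}\geq d_3$, $d_x^{\diamond}\geq d_4^{\perp}$), where $d_2^{\perp}$ and $d_4^{\perp}$ are the minimum distances of the Euclidean duals $C_2^{\perp}$ and $C_4^{\perp}$. Then there exists an AQECC $[[2n,k^{*}+k^{\diamond},d_z/d_x]]_q$ with $d_z\geq\min\{2d_1,d_3\}$ and $d_x\geq\min\{2d_4^{\perp},d_2^{\perp}\}$.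
   Context: An AQECC $[[n,k,d_z/d_x]]_q$ is a $q^k$-dimensional subspace of $\mathbb{C}^{q^n}$ correcting all qudit-flip errors up to $\lfloor (d_x-1)/2\rfloor$ and all phase-shift errors up to $\lfloor (d_z-1)/2\rfloor$. CSS construction: if $C_2\subset C_1\subseteq\mathbb{F}_q^n$ are linear of dimensions $k_2<k_1$, there is an AQECC $[[n,k_1-k_2,d_z/d_x]]_q$ with $d_z=\mathrm{wt}(C_1\setminus C_2)$, $d_x=\mathrm{wt}(C_2^{\perp}\setminus C_1^{\perp})$. *)

theory Defs
  imports "HOL-Analysis.Analysis" "HOL-Library.Function_Algebras"
begin

text \<open>The finite field F_q is a type 'a of class finite and field, q = CARD('a).
  A word of length n is a function nat => 'a vanishing outside {0..<n}.\<close>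

definition vscale :: "'a::field \<Rightarrow> (nat \<Rightarrow> 'a) \<Rightarrow> (nat \<Rightarrow> 'a)" where
  "vscale c v = (\<lambda>i. c * v i)"

definition words :: "nat \<Rightarrow> (nat \<Rightarrow> 'a::zero) set" where
  "words n = {v. \<forall>i\<ge>n. v i = 0}"

definition wt :: "(nat \<Rightarrow> 'a::zero) \<Rightarrow> nat" where
  "wt v = card {i. v i \<noteq> 0}"

definition linear_code :: "nat \<Rightarrow> (nat \<Rightarrow> 'a::field) set \<Rightarrow> bool" where
  "linear_code n C \<longleftrightarrow> C \<subseteq> words n \<and> module.subspace vscale C"

definition code_dim :: "(nat \<Rightarrow> 'a::field) set \<Rightarrow> nat" where
  "code_dim C = vector_space.dim vscale C"

definition min_dist :: "(nat \<Rightarrow> 'a::zero) set \<Rightarrow> nat" where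
  "min_dist C = Min (wt ` (C - {0}))"

definition dotp :: "nat \<Rightarrow> (nat \<Rightarrow> 'a::comm_ring) \<Rightarrow> (nat \<Rightarrow> 'a) \<Rightarrow> 'a" where
  "dotp n u v = (\<Sum>i<n. u i * v i)"

definition dual :: "nat \<Rightarrow> (nat \<Rightarrow> 'a::field) set \<Rightarrow> (nat \<Rightarrow> 'a) set" where
  "dual n C = {v \<in> words n. \<forall>u\<in>C. dotp n u v = 0}"

text \<open>A fixed nontrivial additive character chi of F_q (e.g. chi(x) = omega^(tr x),
  omega a primitive p-th root of unity); the set of errors below does not depend on the choice.\<close>

definition add_char :: "('a::field \<Rightarrow> complex) \<Rightarrow> bool" where
  "add_char ch \<longleftrightarrow> (\<forall>x y. ch (x + y) = ch x * ch y) \<and> (\<forall>x. cmod (ch x) = 1) \<and> (\<exists>x. ch x \<noteq> 1)"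

definition chi :: "'a::field \<Rightarrow> complex" where
  "chi = (SOME ch. add_char ch)"

text \<open>The Hilbert space C^(q^n): complex functions on the words of length n,
  with computational basis |v>, v in words n.\<close>

definition cscale :: "complex \<Rightarrow> ((nat \<Rightarrow> 'a) \<Rightarrow> complex) \<Rightarrow> ((nat \<Rightarrow> 'a) \<Rightarrow> complex)" where
  "cscale c f = (\<lambda>v. c * f v)"

definition hspace :: "nat \<Rightarrow> ((nat \<Rightarrow> 'a::zero) \<Rightarrow> complex) set" where
  "hspace n = {f. \<forall>v. v \<notin> words n \<longrightarrow> f v = 0}"

definition cinner :: "nat \<Rightarrow> ((nat \<Rightarrow> 'a::zero) \<Rightarrow> complex) \<Rightarrow> ((nat \<Rightarrow> 'a) \<Rightarrow> complex) \<Rightarrow> complex" where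
  "cinner n f g = (\<Sum>v\<in>words n. cnj (f v) * g v)"

definition Xop :: "(nat \<Rightarrow> 'a::ab_group_add) \<Rightarrow> ((nat \<Rightarrow> 'a) \<Rightarrow> complex) \<Rightarrow> ((nat \<Rightarrow> 'a) \<Rightarrow> complex)" where
  "Xop a f = (\<lambda>v. f (v - a))"

definition Zop :: "nat \<Rightarrow> (nat \<Rightarrow> 'a::field) \<Rightarrow> ((nat \<Rightarrow> 'a) \<Rightarrow> complex) \<Rightarrow> ((nat \<Rightarrow> 'a) \<Rightarrow> complex)" where
  "Zop n b f = (\<lambda>v. chi (dotp n b v) * f v)"

definition errors :: "nat \<Rightarrow> nat \<Rightarrow> nat \<Rightarrow>
    (((nat \<Rightarrow> 'a::field) \<Rightarrow> complex) \<Rightarrow> ((nat \<Rightarrow> 'a) \<Rightarrow> complex)) set" where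
  "errors n tx tz = {(\<lambda>f. Xop a (Zop n b f)) | a b.
      a \<in> words n \<and> b \<in> words n \<and> wt a \<le> tx \<and> wt b \<le> tz}"

text \<open>Knill--Laflamme error-correction condition: Q corrects E iff for all E1, E2 in E
  there is c with <E1 u, E2 w> = c <u, w> for all u, w in Q (i.e. P E1^dag E2 P = c P).\<close>
definition corrects :: "nat \<Rightarrow> ((nat \<Rightarrow> 'a::zero) \<Rightarrow> complex) set \<Rightarrow>
    ((((nat \<Rightarrow> 'a) \<Rightarrow> complex) \<Rightarrow> ((nat \<Rightarrow> 'a) \<Rightarrow> complex)) set) \<Rightarrow> bool" where
  "corrects n Q E \<longleftrightarrow> (\<forall>e1\<in>E. \<forall>e2\<in>E. \<exists>c. \<forall>u\<in>Q. \<forall>w\<in>Q.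
      cinner n (e1 u) (e2 w) = c * cinner n u w)"

definition is_AQECC :: "nat \<Rightarrow> nat \<Rightarrow> nat \<Rightarrow> nat \<Rightarrow> ((nat \<Rightarrow> 'a::{finite,field}) \<Rightarrow> complex) set \<Rightarrow> bool" where
  "is_AQECC n k dz dx Q \<longleftrightarrow>
     Q \<subseteq> hspace n \<and> module.subspace cscale Q \<and>
     vector_space.dim cscale Q = CARD('a) ^ k \<and>
     corrects n Q (errors n ((dx - 1) div 2) ((dz - 1) div 2))"

end

theory Submission
  imports Defs "HOL-Computational_Algebra.Primes"
begin

lemma vs_vscale: "vector_space (vscale :: 'a::field \<Rightarrow> (nat \<Rightarrow> 'a) \<Rightarrow> _)"
  by unfold_locales (auto simp: vscale_def fun_eq_iff algebra_simps)

lemma vs_cscale: "vector_space (cscale :: complex \<Rightarrow> ((nat \<Rightarrow> 'a) \<Rightarrow> complex) \<Rightarrow> _)"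
  by unfold_locales (auto simp: cscale_def fun_eq_iff algebra_simps)

lemma words_bij: "bij_betw (\<lambda>f. \<lambda>i. if i < n then f i else 0) ({..<n} \<rightarrow>\<^sub>E (UNIV::'a::zero set)) (words n)"
proof (rule bij_betwI[where g = "\<lambda>v. restrict v {..<n}"])
  show "(\<lambda>f i. if i < n then f i else 0) \<in> ({..<n} \<rightarrow>\<^sub>E UNIV) \<rightarrow> words n"
    by (auto simp: words_def)
  show "(\<lambda>v. restrict v {..<n}) \<in> words n \<rightarrow> ({..<n} \<rightarrow>\<^sub>E (UNIV::'a set))" by auto
  show "restrict (\<lambda>i. if i < n then x i else 0) {..<n} = x" if "x \<in> {..<n} \<rightarrow>\<^sub>E (UNIV::'a set)" for x
    using that by (auto simp: fun_eq_iff PiE_def extensional_def)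
  show "(\<lambda>i. if i < n then restrict y {..<n} i else 0) = y" if "y \<in> words n" for y :: "nat \<Rightarrow> 'a"
    using that by (auto simp: fun_eq_iff words_def)
qed

lemma card_words: "card (words n :: (nat \<Rightarrow> 'a::{finite,zero}) set) = CARD('a) ^ n"
  using bij_betw_same_card[OF words_bij[of n, where 'a='a]] by (simp add: card_PiE)

lemma finite_words: "finite (words n :: (nat \<Rightarrow> 'a::{finite,zero}) set)"
  using bij_betw_finite[OF words_bij[of n, where 'a='a]] by (simp add: finite_PiE)

lemma card_span_indep:
  fixes B :: "(nat \<Rightarrow> 'a::{finite,field}) set"
  assumes fin: "finite B" and ind: "\<not> module.dependent vscale B"
  shows "card (module.span vscale B) = CARD('a) ^ card B"
proof -
  interpret v: vector_space "vscale :: 'a \<Rightarrow> (nat \<Rightarrow> 'a) \<Rightarrow> _" by (rule vs_vscale)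
  let ?h = "\<lambda>g. \<Sum>b\<in>B. vscale (g b) b"
  have "bij_betw ?h (B \<rightarrow>\<^sub>E (UNIV::'a set)) (v.span B)"
  proof (rule bij_betw_imageI)
    show "inj_on ?h (B \<rightarrow>\<^sub>E UNIV)"
    proof (rule inj_onI)
      fix g g' assume g: "g \<in> B \<rightarrow>\<^sub>E UNIV" and g': "g' \<in> B \<rightarrow>\<^sub>E UNIV" and eq: "?h g = ?h g'"
      have "(\<Sum>b\<in>B. vscale (g b - g' b) b) = ?h g - ?h g'"
        by (simp add: v.scale_left_diff_distrib sum_subtractf)
      also have "\<dots> = 0" using eq by simp
      finally have z: "(\<Sum>b\<in>B. vscale (g b - g' b) b) = 0" .
      have "\<forall>b\<in>B. g b - g' b = 0"
      proof (rule ccontr)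
        assume "\<not> (\<forall>b\<in>B. g b - g' b = 0)"
        then have "v.dependent B" unfolding v.dependent_finite[OF fin]
          using z by (intro exI[of _ "\<lambda>b. g b - g' b"]) auto
        with ind show False by simp
      qed
      then show "g = g'" using g g' by (auto simp: fun_eq_iff PiE_def extensional_def)
    qed
    show "?h ` (B \<rightarrow>\<^sub>E UNIV) = v.span B"
    proof
      show "?h ` (B \<rightarrow>\<^sub>E UNIV) \<subseteq> v.span B" using v.span_finite[OF fin] by auto
      show "v.span B \<subseteq> ?h ` (B \<rightarrow>\<^sub>E UNIV)"
      proof
        fix x assume "x \<in> v.span B"
        then obtain u where x: "x = (\<Sum>b\<in>B. vscale (u b) b)" using v.span_finite[OF fin] by auto
        have "x = ?h (restrict u B)" unfolding x by (rule sum.cong) auto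
        moreover have "restrict u B \<in> B \<rightarrow>\<^sub>E UNIV" by simp
        ultimately show "x \<in> ?h ` (B \<rightarrow>\<^sub>E UNIV)" by blast
      qed
    qed
  qed
  from bij_betw_same_card[OF this] show ?thesis by (simp add: card_PiE[OF fin])
qed

lemma card_linear_code:
  fixes C :: "(nat \<Rightarrow> 'a::{finite,field}) set"
  assumes "linear_code n C"
  shows "card C = CARD('a) ^ code_dim C" "finite C"
proof -
  interpret v: vector_space "vscale :: 'a \<Rightarrow> (nat \<Rightarrow> 'a) \<Rightarrow> _" by (rule vs_vscale)
  have sub: "v.subspace C" and Cw: "C \<subseteq> words n" using assms by (auto simp: linear_code_def)
  show finC: "finite C" using Cw finite_subset finite_words by blast
  obtain B where B: "B \<subseteq> C" "v.independent B" "C \<subseteq> v.span B" "card B = v.dim C"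
    by (rule v.basis_exists)
  have "v.span B = C" using v.span_subspace[OF B(1) B(3) sub] .
  moreover have "finite B" using B(1) finC finite_subset by blast
  ultimately show "card C = CARD('a) ^ code_dim C"
    using card_span_indep[of B] B by (simp add: code_dim_def)
qed


definition addsub :: "'a::ab_group_add set \<Rightarrow> bool" where
  "addsub H \<longleftrightarrow> 0 \<in> H \<and> (\<forall>x\<in>H. \<forall>y\<in>H. x + y \<in> H) \<and> (\<forall>x\<in>H. -x \<in> H)"

lemma addsub_nat_mult: "addsub H \<Longrightarrow> h \<in> H \<Longrightarrow> of_nat k * (h::'a::ring_1) \<in> H"
  by (induction k) (auto simp: addsub_def algebra_simps)

lemma addsub_int_mult: "addsub H \<Longrightarrow> h \<in> H \<Longrightarrow> of_int z * (h::'a::ring_1) \<in> H"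
proof (cases "z \<ge> 0")
  case True
  assume "addsub H" "h \<in> H"
  then have "of_nat (nat z) * h \<in> H" by (rule addsub_nat_mult)
  then show ?thesis using True by simp
next
  case False
  assume a: "addsub H" "h \<in> H"
  then have "of_nat (nat (-z)) * h \<in> H" by (rule addsub_nat_mult)
  then have "- (of_nat (nat (-z)) * h) \<in> H" using a(1) by (auto simp: addsub_def)
  then show ?thesis using False by simp
qed

lemma exists_max_addsub:
  obtains H :: "'a::{finite,field} set" where "addsub H" "H \<noteq> UNIV"
    "\<And>H'. addsub H' \<Longrightarrow> H \<subset> H' \<Longrightarrow> H' = UNIV"
proof -
  define F where "F = {H :: 'a set. addsub H \<and> H \<noteq> UNIV}"
  have finF: "finite F" by simp
  have "(1::'a) \<notin> {0}" by simp
  then have "{0::'a} \<noteq> UNIV" by blast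
  then have "{0} \<in> F" unfolding F_def addsub_def by simp
  then have ne: "F \<noteq> {}" by auto
  have "Max (card ` F) \<in> card ` F" using Max_in[of "card ` F"] finF ne by auto
  then obtain H where H: "H \<in> F" "card H = Max (card ` F)" by (metis imageE)
  show ?thesis
  proof (rule that)
    show "addsub H" "H \<noteq> UNIV" using H(1) by (auto simp: F_def)
    fix H' assume "addsub H'" "H \<subset> H'"
    show "H' = UNIV"
    proof (rule ccontr)
      assume "H' \<noteq> UNIV"
      then have "H' \<in> F" using \<open>addsub H'\<close> by (auto simp: F_def)
      then have "card H' \<le> card H" using H finF by simp
      moreover have "card H < card H'" using \<open>H \<subset> H'\<close> by (simp add: psubset_card_mono)
      ultimately show False by simp
    qed
  qed
qed

lemma exists_add_char: "\<exists>ch::'a::{finite,field} \<Rightarrow> complex. add_char ch"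
proof -
  define p where "p = CHAR('a)"
  have ppos: "p > 0" unfolding p_def by (rule finite_imp_CHAR_pos) simp
  have pprime: "prime p" using prime_CHAR_semidom[where 'a='a] ppos unfolding p_def by auto
  have ofp: "(of_nat p :: 'a) = 0" unfolding p_def by simp
  obtain H :: "'a set" where H: "addsub H" "H \<noteq> UNIV"
    and Hmax: "\<And>H'. addsub H' \<Longrightarrow> H \<subset> H' \<Longrightarrow> H' = UNIV"
    using exists_max_addsub[where 'a='a] by blast
  obtain g where g: "g \<notin> H" using H(2) by auto
  have key: "int p dvd z" if "of_int z * g \<in> H" for z
  proof (rule ccontr)
    assume nd: "\<not> int p dvd z"
    have "prime (int p)" using pprime by simp
    then have "coprime (int p) z" using nd by (simp add: prime_imp_coprime)
    then have "gcd (int p) z = 1" by simp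
    then obtain u v where uv: "u * int p + v * z = 1" using bezout_int[of "int p" z] by auto
    have "(of_int v * of_int z :: 'a) = 1"
    proof -
      have "(of_int (u * int p + v * z) :: 'a) = 1" using uv by simp
      then show ?thesis using ofp by simp
    qed
    then have "g = of_int v * (of_int z * g)" by (simp add: mult.assoc[symmetric])
    also have "\<dots> \<in> H" using addsub_int_mult[OF H(1) that] by simp
    finally show False using g by simp
  qed
  define H' where "H' = {of_nat k * g + h | k h. h \<in> H}"
  have "addsub H'"
    unfolding addsub_def
  proof (intro conjI ballI)
    show "0 \<in> H'" unfolding H'_def using H(1) by (auto simp: addsub_def intro!: exI[of _ 0])
    fix x y assume "x \<in> H'" "y \<in> H'"
    then obtain k h k' h' where x: "x = of_nat k * g + h" "h \<in> H" and y: "y = of_nat k' * g + h'" "h' \<in> H"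
      unfolding H'_def by auto
    have "x + y = of_nat (k + k') * g + (h + h')" using x y by (simp add: algebra_simps)
    then show "x + y \<in> H'" using x y H(1) unfolding H'_def addsub_def by blast
  next
    fix x assume "x \<in> H'"
    then obtain k h where x: "x = of_nat k * g + h" "h \<in> H" unfolding H'_def by auto
    have "(of_nat (k * (p - 1)) :: 'a) = - of_nat k"
    proof -
      have "(of_nat (k * (p - 1)) :: 'a) = of_nat k * (of_nat p - 1)"
        using ppos by (simp add: of_nat_diff)
      then show ?thesis using ofp by simp
    qed
    then have "-x = of_nat (k * (p - 1)) * g + (- h)" using x by (simp add: algebra_simps)
    then show "-x \<in> H'" using x H(1) unfolding H'_def addsub_def by blast
  qed
  moreover have "H \<subset> H'"
  proof
    show "H \<subseteq> H'"
    proof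
      fix x assume "x \<in> H"
      then show "x \<in> H'" unfolding H'_def by (intro CollectI exI[of _ "0::nat"] exI[of _ x]) simp
    qed
    have "g \<in> H'" unfolding H'_def using H(1)
      by (intro CollectI exI[of _ "1::nat"] exI[of _ "0::'a"]) (simp add: addsub_def)
    then show "H \<noteq> H'" using g by auto
  qed
  ultimately have H'U: "H' = UNIV" by (rule Hmax)
  define kk where "kk x = (SOME k. \<exists>h\<in>H. x = of_nat k * g + h)" for x
  have kk: "\<exists>h\<in>H. x = of_nat (kk x) * g + h" for x
  proof -
    have "x \<in> H'" using H'U by simp
    then have "\<exists>k. \<exists>h\<in>H. x = of_nat k * g + h" unfolding H'_def by auto
    then show ?thesis unfolding kk_def by (rule someI_ex)
  qed
  define w where "w = cis (2 * pi / p)"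
  have wp: "w ^ p = 1" unfolding w_def using ppos by (simp add: Complex.DeMoivre)
  have wmod: "w ^ k = w ^ k'" if "of_nat k * g + h = of_nat k' * g + h'" "h \<in> H" "h' \<in> H" for k k' h h'
  proof -
    have "of_int (int k - int k') * g = h' - h" using that(1) by (simp add: algebra_simps)
    also have "\<dots> \<in> H" using H(1) that(2,3) unfolding addsub_def by (metis diff_conv_add_uminus)
    finally have d: "int p dvd int k - int k'" by (rule key)
    have gen: "w ^ a = w ^ b" if "int p dvd int a - int b" "b \<le> a" for a b
    proof -
      have "int p dvd int (a - b)" using that by (simp add: of_nat_diff)
      then obtain j where "a - b = p * j" by (auto simp: int_dvd_int_iff)
      then have "a = b + p * j" using that(2) by simp
      then show ?thesis by (simp add: power_add power_mult wp)
    qed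
    show ?thesis
    proof (cases "k' \<le> k")
      case True then show ?thesis using gen d by blast
    next
      case False
      have "int p dvd int k' - int k" using d by (metis dvd_minus_iff minus_diff_eq)
      then show ?thesis using gen False by (metis nle_le)
    qed
  qed
  define ch where "ch x = w ^ kk x" for x
  have "add_char ch"
    unfolding add_char_def
  proof (intro conjI allI)
    fix x y :: 'a
    obtain h where h: "h \<in> H" "x = of_nat (kk x) * g + h" using kk by blast
    obtain h' where h': "h' \<in> H" "y = of_nat (kk y) * g + h'" using kk by blast
    obtain h'' where h'': "h'' \<in> H" "x + y = of_nat (kk (x + y)) * g + h''" using kk by blast
    have e0: "x + y = (of_nat (kk x) * g + h) + (of_nat (kk y) * g + h')"
      using h(2) h'(2) by argo
    have e1: "x + y = of_nat (kk x + kk y) * g + (h + h')"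
      unfolding e0 by (simp add: algebra_simps)
    have "of_nat (kk (x+y)) * g + h'' = of_nat (kk x + kk y) * g + (h + h')"
      using e1 h''(2) by argo
    then have "w ^ kk (x + y) = w ^ (kk x + kk y)"
      using wmod h h' h'' H(1) unfolding addsub_def by blast
    then show "ch (x + y) = ch x * ch y" unfolding ch_def by (simp add: power_add)
  next
    fix x show "cmod (ch x) = 1" unfolding ch_def w_def by (simp add: norm_power)
  next
    obtain h where h: "h \<in> H" "g = of_nat (kk g) * g + h" using kk by blast
    have "of_nat (kk g) * g + h = of_nat 1 * g + 0" using h by simp
    then have "ch g = w" unfolding ch_def using wmod h H(1) unfolding addsub_def by (metis power_one_right)
    moreover have "w \<noteq> 1"
    proof
      assume "w = 1"
      then have "cos (2 * pi / p) = 1" unfolding w_def by (metis cis.sel(1) one_complex.sel(1))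
      then obtain n :: int where n: "2 * pi / p = of_int n * (2 * pi)"
        unfolding cos_one_2pi_int by (auto simp: mult.assoc)
      have p2: "p \<ge> 2" using pprime by (simp add: prime_ge_2_nat)
      have "1 / real p = (2 * pi / p) / (2 * pi)" by simp
      also have "\<dots> = of_int n" unfolding n by simp
      finally have "1 / real p = of_int n" .
      moreover have "0 < 1 / real p" "1 / real p < 1" using p2 by auto
      ultimately have "0 < n" "n < 1" by simp_all
      then show False by simp
    qed
    ultimately show "\<exists>x. ch x \<noteq> 1" by auto
  qed
  then show ?thesis by blast
qed


lemma chi_char: "add_char (chi :: 'a::{finite,field} \<Rightarrow> complex)"
  unfolding chi_def using exists_add_char by (rule someI_ex)

lemma chi_add: "chi (x + y :: 'a::{finite,field}) = chi x * chi y"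
  using chi_char unfolding add_char_def by blast

lemma chi_0: "chi (0 :: 'a::{finite,field}) = 1"
proof -
  have n: "cmod (chi (0::'a)) = 1" using chi_char unfolding add_char_def by blast
  have "chi (0::'a) = chi (0::'a) * chi (0::'a)" using chi_add[of "0::'a" "0::'a"] by (simp only: add_0)
  then show ?thesis using n by (metis mult_cancel_left2 norm_zero zero_neq_one)
qed

lemma chi_neg: "cnj (chi (x :: 'a::{finite,field})) = chi (- x)"
proof -
  have n: "cmod (chi x) = 1" using chi_char unfolding add_char_def by blast
  have "chi x * chi (-x) = 1" using chi_add[of x "-x", symmetric] chi_0 by simp
  moreover have "chi x * cnj (chi x) = 1" using n by (simp add: complex_norm_square[symmetric])
  ultimately show ?thesis using n by (metis mult_cancel_left norm_zero zero_neq_one)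
qed

lemma chi_nontriv: "\<exists>t. chi (t :: 'a::{finite,field}) \<noteq> 1"
  using chi_char unfolding add_char_def by blast

lemma dotp_comm: "dotp n u v = dotp n v (u :: nat \<Rightarrow> 'a::comm_ring)"
  unfolding dotp_def by (simp add: mult.commute)

lemma dotp_add_right: "dotp n u (v + w) = dotp n u v + dotp n u (w :: nat \<Rightarrow> 'a::comm_ring)"
  unfolding dotp_def by (simp add: distrib_left sum.distrib)

lemma dotp_add_left: "dotp n (v + w) u = dotp n v u + dotp n w (u :: nat \<Rightarrow> 'a::comm_ring)"
  unfolding dotp_def by (simp add: distrib_right sum.distrib)

lemma dotp_diff_right: "dotp n u (v - w) = dotp n u v - dotp n u (w :: nat \<Rightarrow> 'a::comm_ring)"
  unfolding dotp_def by (simp add: right_diff_distrib sum_subtractf)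

lemma dotp_diff_left: "dotp n (v - w) u = dotp n v u - dotp n w (u :: nat \<Rightarrow> 'a::comm_ring)"
  unfolding dotp_def by (simp add: left_diff_distrib sum_subtractf)

lemma dotp_scale_right: "dotp n u (vscale c v) = c * dotp n u (v :: nat \<Rightarrow> 'a::field)"
  unfolding dotp_def vscale_def by (simp add: sum_distrib_left algebra_simps)

lemma dotp_zero_right[simp]: "dotp n u 0 = (0::'a::comm_ring)"
  unfolding dotp_def by simp

lemma dotp_zero_left[simp]: "dotp n 0 u = (0::'a::comm_ring)"
  unfolding dotp_def by simp

lemma subspace_iff: "module.subspace (vscale :: 'a::field \<Rightarrow> _) S \<longleftrightarrow>
   0 \<in> S \<and> (\<forall>x\<in>S. \<forall>y\<in>S. x + y \<in> S) \<and> (\<forall>c. \<forall>x\<in>S. vscale c x \<in> S)"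
proof -
  have "module (vscale :: 'a::field \<Rightarrow> _)" using vs_vscale by (simp add: module_iff_vector_space)
  then show ?thesis by (simp add: module.subspace_def)
qed

lemma subspace_neg: "module.subspace (vscale :: 'a::field \<Rightarrow> _) S \<Longrightarrow> x \<in> S \<Longrightarrow> - x \<in> S"
proof -
  assume "module.subspace vscale S" "x \<in> S"
  then have "vscale (-1) x \<in> S" by (simp add: subspace_iff)
  moreover have "vscale (-1) x = - x" by (simp add: vscale_def fun_eq_iff)
  ultimately show ?thesis by simp
qed

lemma subspace_diff: "module.subspace (vscale :: 'a::field \<Rightarrow> _) S \<Longrightarrow> x \<in> S \<Longrightarrow> y \<in> S \<Longrightarrow> x - y \<in> S"
  using subspace_neg[of S y] by (simp add: subspace_iff) (metis diff_conv_add_uminus)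

lemma words_subspace: "module.subspace (vscale :: 'a::field \<Rightarrow> _) (words n)"
  by (auto simp: subspace_iff words_def vscale_def)

lemma linear_code_dual: "linear_code n (dual n (C :: (nat \<Rightarrow> 'a::field) set))"
  unfolding linear_code_def subspace_iff
  by (auto simp: dual_def words_def dotp_add_right dotp_scale_right) (simp add: vscale_def)

lemma char_sum_zero:
  fixes V V' :: "(nat \<Rightarrow> 'a::{finite,field}) set" and g :: "(nat \<Rightarrow> 'a) \<Rightarrow> complex"
  assumes finV': "finite V'"
    and trans: "\<And>a v. a \<in> V \<Longrightarrow> v \<in> V' \<Longrightarrow> v + a \<in> V'"
    and subV: "module.subspace vscale V"
    and ginv: "\<And>a v. a \<in> V \<Longrightarrow> g (v + a) = g v"
    and a0: "a0 \<in> V" "dotp N b a0 \<noteq> 0"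
  shows "(\<Sum>v\<in>V'. chi (dotp N b v) * g v) = 0"
proof -
  obtain t :: 'a where t: "chi t \<noteq> 1" using chi_nontriv by blast
  define a where "a = vscale (t / dotp N b a0) a0"
  have aV: "a \<in> V" using subV a0(1) unfolding a_def subspace_iff by blast
  have ba: "dotp N b a = t" unfolding a_def dotp_scale_right using a0(2) by simp
  have naV: "- a \<in> V" using subspace_neg[OF subV aV] .
  have bij: "bij_betw (\<lambda>v. v + a) V' V'"
  proof (rule bij_betwI[where g = "\<lambda>v. v + (- a)"])
    show "(\<lambda>v. v + a) \<in> V' \<rightarrow> V'" using trans aV by auto
    show "(\<lambda>v. v + (- a)) \<in> V' \<rightarrow> V'" using trans[OF naV] by simp
  qed auto
  let ?F = "\<lambda>v. chi (dotp N b v) * g v"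
  have "(\<Sum>v\<in>V'. ?F v) = (\<Sum>v\<in>V'. ?F (v + a))"
    using sum.reindex_bij_betw[OF bij, of ?F] by simp
  also have "\<dots> = (\<Sum>v\<in>V'. chi t * ?F v)"
    by (rule sum.cong) (auto simp: dotp_add_right ba chi_add ginv[OF aV])
  also have "\<dots> = chi t * (\<Sum>v\<in>V'. ?F v)" by (simp add: sum_distrib_left)
  finally have "(1 - chi t) * (\<Sum>v\<in>V'. ?F v) = 0" by (simp add: algebra_simps)
  then show ?thesis using t by simp
qed

lemma card_dual:
  fixes D :: "(nat \<Rightarrow> 'a::{finite,field}) set"
  assumes lc: "linear_code N D"
  shows "card D * card (dual N D) = CARD('a) ^ N"
proof -
  let ?W = "words N :: (nat \<Rightarrow> 'a) set"
  have DW: "D \<subseteq> ?W" and subD: "module.subspace vscale D" using lc by (auto simp: linear_code_def)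
  have finW: "finite ?W" by (rule finite_words)
  have finD: "finite D" using finite_subset[OF DW finW] .
  have dW: "dual N D \<subseteq> ?W" by (auto simp: dual_def)
  have inner1: "(\<Sum>d\<in>D. chi (dotp N d v)) = (if v \<in> dual N D then of_nat (card D) else 0)"
    if v: "v \<in> ?W" for v
  proof (cases "v \<in> dual N D")
    case True
    then have "(\<Sum>d\<in>D. chi (dotp N d v)) = (\<Sum>d\<in>D. 1)"
      by (intro sum.cong) (auto simp: dual_def chi_0)
    then show ?thesis using True by simp
  next
    case False
    then obtain d0 where d0: "d0 \<in> D" "dotp N d0 v \<noteq> 0" using v by (auto simp: dual_def)
    have "(\<Sum>d\<in>D. chi (dotp N v d) * 1) = 0"
      by (rule char_sum_zero[OF finD _ subD _ d0(1)]) (use subD d0 in \<open>auto simp: subspace_iff dotp_comm\<close>)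
    then show ?thesis using False by (simp add: dotp_comm)
  qed
  have inner2: "(\<Sum>v\<in>?W. chi (dotp N d v)) = (if d = 0 then of_nat (card ?W) else 0)"
    if d: "d \<in> ?W" for d
  proof (cases "d = 0")
    case True
    then show ?thesis by (simp add: chi_0)
  next
    case False
    then obtain i where i: "d i \<noteq> 0" by (auto simp: fun_eq_iff zero_fun_def)
    then have iN: "i < N" using d by (auto simp: words_def) (meson not_le)
    define e where "e = (\<lambda>j. if j = i then (1::'a) else 0)"
    have eW: "e \<in> ?W" using iN by (auto simp: words_def e_def)
    have de: "dotp N d e = d i" unfolding dotp_def e_def using iN by (simp add: if_distrib cong: if_cong)
    have "(\<Sum>v\<in>?W. chi (dotp N d v) * 1) = 0"
      by (rule char_sum_zero[OF finW _ words_subspace _ eW]) (use de i words_subspace in \<open>auto simp: subspace_iff\<close>)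
    then show ?thesis using False by simp
  qed
  have "(\<Sum>v\<in>?W. \<Sum>d\<in>D. chi (dotp N d v)) = (\<Sum>v\<in>?W. if v \<in> dual N D then of_nat (card D) else 0)"
    by (rule sum.cong) (auto simp: inner1)
  also have "\<dots> = (\<Sum>v\<in>dual N D. of_nat (card D))"
    using dW finW by (simp add: sum.If_cases Int_absorb1)
  also have "\<dots> = of_nat (card D * card (dual N D))" by simp
  finally have e1: "(\<Sum>v\<in>?W. \<Sum>d\<in>D. chi (dotp N d v)) = of_nat (card D * card (dual N D))" .
  have "(\<Sum>v\<in>?W. \<Sum>d\<in>D. chi (dotp N d v)) = (\<Sum>d\<in>D. \<Sum>v\<in>?W. chi (dotp N d v))"
    by (rule sum.swap)
  also have "\<dots> = (\<Sum>d\<in>D. if d = 0 then of_nat (card ?W) else 0)"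
    by (rule sum.cong) (use DW in \<open>auto simp: inner2 chi_0\<close>)
  also have "\<dots> = of_nat (card ?W)"
  proof -
    have "0 \<in> D" using subD by (simp add: subspace_iff)
    then show ?thesis using finD by (simp only: sum.delta) simp
  qed
  finally have "of_nat (card D * card (dual N D)) = (of_nat (card ?W) :: complex)" using e1 by simp
  then have "card D * card (dual N D) = card ?W" by (simp only: of_nat_eq_iff)
  then show ?thesis by (simp add: card_words)
qed

lemma dual_dual:
  fixes D :: "(nat \<Rightarrow> 'a::{finite,field}) set"
  assumes lc: "linear_code N D"
  shows "dual N (dual N D) = D"
proof -
  have DW: "D \<subseteq> words N" using lc by (auto simp: linear_code_def)
  have sub: "D \<subseteq> dual N (dual N D)" using DW by (auto simp: dual_def dotp_comm)
  have l1: "linear_code N (dual N D)" by (rule linear_code_dual)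
  have c1: "card D * card (dual N D) = CARD('a) ^ N" by (rule card_dual[OF lc])
  have c2: "card (dual N D) * card (dual N (dual N D)) = CARD('a) ^ N" by (rule card_dual[OF l1])
  have "0 \<in> dual N D" using l1 by (auto simp: linear_code_def subspace_iff)
  moreover have "finite (dual N D)" using card_linear_code(2)[OF l1] .
  ultimately have "card (dual N D) > 0" by (auto simp: card_gt_0_iff)
  then have "card (dual N (dual N D)) = card D" using c1 c2 by (metis mult.commute mult_left_cancel neq0_conv)
  moreover have "finite (dual N (dual N D))" using card_linear_code(2)[OF linear_code_dual] .
  ultimately show ?thesis using sub by (metis card_subset_eq)
qed


definition pl :: "nat \<Rightarrow> (nat \<Rightarrow> 'a::ab_group_add) \<Rightarrow> (nat \<Rightarrow> 'a) \<Rightarrow> (nat \<Rightarrow> 'a)" where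
  "pl n u v = (\<lambda>i. if i < n then u i else u (i - n) + v (i - n))"

definition uuv :: "nat \<Rightarrow> (nat \<Rightarrow> 'a::ab_group_add) set \<Rightarrow> (nat \<Rightarrow> 'a) set \<Rightarrow> (nat \<Rightarrow> 'a) set" where
  "uuv n C C' = {pl n u v | u v. u \<in> C \<and> v \<in> C'}"

lemma supp_finite: "v \<in> words n \<Longrightarrow> finite {i. v i \<noteq> 0}"
  by (rule finite_subset[of _ "{..<n}"]) (auto simp: words_def, meson not_le)

lemma wt_triangle:
  assumes "x \<in> words n" "y \<in> words n"
  shows "wt (x + y) \<le> wt x + wt (y :: nat \<Rightarrow> 'a::ab_group_add)"
proof -
  have "{i. (x + y) i \<noteq> 0} \<subseteq> {i. x i \<noteq> 0} \<union> {i. y i \<noteq> 0}" by auto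
  then have "card {i. (x + y) i \<noteq> 0} \<le> card ({i. x i \<noteq> 0} \<union> {i. y i \<noteq> 0})"
    using supp_finite[OF assms(1)] supp_finite[OF assms(2)] by (intro card_mono) auto
  also have "\<dots> \<le> card {i. x i \<noteq> 0} + card {i. y i \<noteq> 0}" by (rule card_Un_le)
  finally show ?thesis unfolding wt_def .
qed

lemma wt_neg: "wt (- x) = wt (x :: nat \<Rightarrow> 'a::ab_group_add)"
  unfolding wt_def by simp

lemma wt_split:
  fixes f :: "nat \<Rightarrow> 'a::ab_group_add"
  assumes f: "f \<in> words (n + n)"
  shows "wt f = wt (\<lambda>i. if i < n then f i else 0) + wt (\<lambda>i. f (i + n))"
proof -
  have e: "{i. f i \<noteq> 0} = {i. (if i < n then f i else 0) \<noteq> 0} \<union> (\<lambda>i. i + n) ` {i. f (i + n) \<noteq> 0}"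
    by (auto simp: image_iff) (metis add.commute le_add_diff_inverse not_le)
  have f1: "finite {i. (if i < n then f i else 0) \<noteq> 0}" by (rule finite_subset[of _ "{..<n}"]) auto
  have f2: "finite {i. f (i + n) \<noteq> 0}"
    by (rule finite_subset[of _ "{..<n}"]) (use f in \<open>auto simp: words_def, meson add_le_cancel_right not_le\<close>)
  have "card {i. f i \<noteq> 0} = card {i. (if i < n then f i else 0) \<noteq> 0} + card ((\<lambda>i. i + n) ` {i. f (i + n) \<noteq> 0})"
    unfolding e using f1 f2 by (intro card_Un_disjoint) auto
  also have "card ((\<lambda>i. i + n) ` {i. f (i + n) \<noteq> 0}) = card {i. f (i + n) \<noteq> 0}"
    by (intro card_image) (auto simp: inj_on_def)
  finally show ?thesis unfolding wt_def .
qed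

lemma pl_words: "u \<in> words n \<Longrightarrow> v \<in> words n \<Longrightarrow> pl n u v \<in> words (n + n)"
  by (auto simp: pl_def words_def)

lemma pl_first: "u \<in> words n \<Longrightarrow> (\<lambda>i. if i < n then pl n u v i else 0) = u"
  by (auto simp: pl_def words_def fun_eq_iff)

lemma pl_second: "(\<lambda>i. pl n u v (i + n)) = u + v"
  by (auto simp: pl_def fun_eq_iff)

lemma wt_pl:
  assumes "u \<in> words n" "v \<in> words n"
  shows "wt (pl n u v) = wt u + wt (u + v)"
proof -
  have "wt (pl n u v) = wt (\<lambda>i. if i < n then pl n u v i else 0) + wt (\<lambda>i. pl n u v (i + n))"
    by (rule wt_split[OF pl_words[OF assms]])
  then show ?thesis by (simp only: pl_first[OF assms(1)] pl_second)
qed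

lemma sum_split: "(\<Sum>i<n + (m::nat). f i) = (\<Sum>i<n. f i) + (\<Sum>i<m. f (i + n))"
  by (induction m) (auto simp: add.commute add.left_commute)

lemma dotp_pl:
  fixes a :: "nat \<Rightarrow> 'a::comm_ring"
  shows "dotp (n + n) (pl n u v) a = dotp n u (\<lambda>i. if i < n then a i else 0) + dotp n (u + v) (\<lambda>i. a (i + n))"
  unfolding dotp_def sum_split by (simp add: pl_def)

lemma min_dist_le:
  assumes "finite C" "x \<in> C" "x \<noteq> 0"
  shows "min_dist C \<le> wt x"
  unfolding min_dist_def using assms by (intro Min_le) auto



lemma pl_inj:
  assumes "u \<in> words n" "u' \<in> words n" "pl n u v = pl n u' v'"
  shows "u = u' \<and> v = v'"
proof -
  have "u = (\<lambda>i. if i < n then pl n u v i else 0)" using pl_first[OF assms(1), of v] by simp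
  also have "\<dots> = (\<lambda>i. if i < n then pl n u' v' i else 0)" by (simp only: assms(3))
  also have "\<dots> = u'" using pl_first[OF assms(2), of v'] by simp
  finally have "u = u'" .
  moreover have "u + v = u' + v'" using pl_second[of n u v] pl_second[of n u' v'] assms(3) by simp
  ultimately show ?thesis by simp
qed

lemma pl_zero_iff: "u \<in> words n \<Longrightarrow> pl n u v = 0 \<longleftrightarrow> u = 0 \<and> v = 0"
proof -
  assume u: "u \<in> words n"
  have z: "pl n 0 0 = (0 :: nat \<Rightarrow> 'a)" by (simp add: pl_def fun_eq_iff)
  have z0: "(0 :: nat \<Rightarrow> 'a) \<in> words n" by (simp add: words_def)
  show ?thesis using pl_inj[OF u z0, of v 0] z by auto
qed

lemma linear_code_uuv:
  fixes C C' :: "(nat \<Rightarrow> 'a::field) set"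
  assumes "linear_code n C" "linear_code n C'"
  shows "linear_code (n + n) (uuv n C C')"
proof -
  have s: "module.subspace vscale C" "module.subspace vscale C'" "C \<subseteq> words n" "C' \<subseteq> words n"
    using assms by (auto simp: linear_code_def)
  have "uuv n C C' \<subseteq> words (n + n)" using s(3,4) by (auto simp: uuv_def intro!: pl_words)
  moreover have "module.subspace vscale (uuv n C C')"
    unfolding subspace_iff
  proof (intro conjI ballI allI)
    show "0 \<in> uuv n C C'" unfolding uuv_def using s(1,2)
      by (auto simp: subspace_iff pl_def fun_eq_iff intro!: exI[of _ 0])
  next
    fix x y assume "x \<in> uuv n C C'" "y \<in> uuv n C C'"
    then obtain u v u' v' where x: "x = pl n u v" "u \<in> C" "v \<in> C'" and y: "y = pl n u' v'" "u' \<in> C" "v' \<in> C'"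
      unfolding uuv_def by auto
    have "x + y = pl n (u + u') (v + v')" using x y by (auto simp: pl_def fun_eq_iff)
    moreover have "u + u' \<in> C" "v + v' \<in> C'" using s(1,2) x y by (auto simp: subspace_iff)
    ultimately show "x + y \<in> uuv n C C'" unfolding uuv_def by blast
  next
    fix c x assume "x \<in> uuv n C C'"
    then obtain u v where x: "x = pl n u v" "u \<in> C" "v \<in> C'" unfolding uuv_def by auto
    have "vscale c x = pl n (vscale c u) (vscale c v)" using x by (auto simp: pl_def fun_eq_iff vscale_def algebra_simps)
    moreover have "vscale c u \<in> C" "vscale c v \<in> C'" using s(1,2) x by (auto simp: subspace_iff)
    ultimately show "vscale c x \<in> uuv n C C'" unfolding uuv_def by blast
  qed
  ultimately show ?thesis by (simp add: linear_code_def)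
qed

lemma card_uuv:
  assumes "C \<subseteq> words n"
  shows "card (uuv n C C') = card C * card C'"
proof -
  have "uuv n C C' = (\<lambda>(u, v). pl n u v) ` (C \<times> C')" unfolding uuv_def by auto
  moreover have "inj_on (\<lambda>(u, v). pl n u v) (C \<times> C')"
    using pl_inj assms by (fastforce simp: inj_on_def)
  ultimately show ?thesis by (simp add: card_image card_cartesian_product)
qed

lemma uuv_mono: "A \<subseteq> C \<Longrightarrow> B \<subseteq> C' \<Longrightarrow> uuv n A B \<subseteq> uuv n C C'"
  unfolding uuv_def by blast



lemma wt_uuv:
  fixes C1 C3 :: "(nat \<Rightarrow> 'a::{finite,field}) set"
  assumes l1: "linear_code n C1" and l3: "linear_code n C3"
    and x: "x \<in> uuv n C1 C3" "x \<noteq> 0"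
  shows "min (2 * min_dist C1) (min_dist C3) \<le> wt x"
proof -
  obtain u v where xuv: "x = pl n u v" "u \<in> C1" "v \<in> C3" using x unfolding uuv_def by auto
  have uw: "u \<in> words n" and vw: "v \<in> words n" using xuv l1 l3 by (auto simp: linear_code_def)
  have wx: "wt x = wt u + wt (u + v)" using wt_pl[OF uw vw] xuv by simp
  show ?thesis
  proof (cases "v = 0")
    case True
    then have "u \<noteq> 0" using x(2) xuv pl_zero_iff[OF uw] by auto
    then have "min_dist C1 \<le> wt u" using min_dist_le[OF card_linear_code(2)[OF l1] xuv(2)] by simp
    then show ?thesis using wx True by simp
  next
    case False
    then have "min_dist C3 \<le> wt v" using min_dist_le[OF card_linear_code(2)[OF l3] xuv(3)] by simp
    moreover have "wt v \<le> wt (- u) + wt (u + v)"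
      using wt_triangle[of "- u" n "u + v"] uw vw by (auto simp: words_def)
    ultimately show ?thesis using wx by (simp add: wt_neg)
  qed
qed



lemma wt_dual_uuv:
  fixes C2 C4 :: "(nat \<Rightarrow> 'a::{finite,field}) set"
  assumes l2: "linear_code n C2" and l4: "linear_code n C4"
    and a: "a \<in> dual (n + n) (uuv n C2 C4)" "a \<noteq> 0"
  shows "min (2 * min_dist (dual n C4)) (min_dist (dual n C2)) \<le> wt a"
proof -
  define x where "x = (\<lambda>i. if i < n then a i else 0)"
  define y where "y = (\<lambda>i. a (i + n))"
  have aw: "a \<in> words (n + n)" using a by (simp add: dual_def)
  have xw: "x \<in> words n" by (auto simp: x_def words_def)
  have yw: "y \<in> words n" using aw by (auto simp: y_def words_def)
  have wa: "wt a = wt x + wt y" using wt_split[OF aw] by (simp add: x_def y_def)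
  have z2: "0 \<in> C2" and z4: "0 \<in> C4" using l2 l4 by (auto simp: linear_code_def subspace_iff)
  have orth: "dotp n u x + dotp n (u + v) y = 0" if "u \<in> C2" "v \<in> C4" for u v
  proof -
    have "pl n u v \<in> uuv n C2 C4" using that unfolding uuv_def by blast
    then have "dotp (n + n) (pl n u v) a = 0" using a(1) by (auto simp: dual_def)
    then show ?thesis by (simp add: dotp_pl x_def y_def)
  qed
  have yd: "y \<in> dual n C4"
    using yw orth[OF z2] by (auto simp: dual_def)
  have xyd: "x + y \<in> dual n C2"
    using xw yw orth[OF _ z4] by (auto simp: dual_def words_def dotp_add_right)
  show ?thesis
  proof (cases "x + y = 0")
    case True
    then have xy: "x = - y" by (simp add: eq_neg_iff_add_eq_0)
    have "y \<noteq> 0"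
    proof
      assume "y = 0"
      then have "x = 0" using xy by simp
      then have "a = 0" using \<open>y = 0\<close> unfolding x_def y_def fun_eq_iff
        by (metis le_add_diff_inverse2 not_le zero_fun_def)
      then show False using a(2) by simp
    qed
    then have "min_dist (dual n C4) \<le> wt y"
      using min_dist_le[OF card_linear_code(2)[OF linear_code_dual] yd] by simp
    then show ?thesis using wa xy by (simp add: wt_neg)
  next
    case False
    then have "min_dist (dual n C2) \<le> wt (x + y)"
      using min_dist_le[OF card_linear_code(2)[OF linear_code_dual] xyd] by simp
    moreover have "wt (x + y) \<le> wt x + wt y" by (rule wt_triangle[OF xw yw])
    ultimately show ?thesis using wa by simp
  qed
qed



lemma sum_apply_fun: "(\<Sum>x\<in>B. F x) (v::'b) = (\<Sum>x\<in>B. F x v :: 'c::comm_monoid_add)"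
  by (induction B rule: infinite_finite_induct) auto

lemma cs_subspace_iff: "module.subspace (cscale :: complex \<Rightarrow> ((nat \<Rightarrow> 'a) \<Rightarrow> complex) \<Rightarrow> _) S \<longleftrightarrow>
   0 \<in> S \<and> (\<forall>x\<in>S. \<forall>y\<in>S. x + y \<in> S) \<and> (\<forall>c. \<forall>x\<in>S. cscale c x \<in> S)"
proof -
  have "module (cscale :: complex \<Rightarrow> ((nat \<Rightarrow> 'a) \<Rightarrow> complex) \<Rightarrow> _)" using vs_cscale by (simp add: module_iff_vector_space)
  then show ?thesis by (simp add: module.subspace_def)
qed

definition Qcode :: "(nat \<Rightarrow> 'a::ab_group_add) set \<Rightarrow> (nat \<Rightarrow> 'a) set \<Rightarrow> ((nat \<Rightarrow> 'a) \<Rightarrow> complex) set" where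
  "Qcode Sp A = {f. (\<forall>v. f v \<noteq> 0 \<longrightarrow> v \<in> Sp) \<and> (\<forall>a\<in>A. \<forall>v. f (v + a) = f v)}"

lemma Qcode_subspace: "module.subspace cscale (Qcode Sp A)"
  unfolding cs_subspace_iff Qcode_def
proof (intro conjI ballI allI)
  fix x y :: "(nat \<Rightarrow> 'a) \<Rightarrow> complex" assume x: "x \<in> {f. (\<forall>v. f v \<noteq> 0 \<longrightarrow> v \<in> Sp) \<and> (\<forall>a\<in>A. \<forall>v. f (v + a) = f v)}"
    and y: "y \<in> {f. (\<forall>v. f v \<noteq> 0 \<longrightarrow> v \<in> Sp) \<and> (\<forall>a\<in>A. \<forall>v. f (v + a) = f v)}"
  have "v \<in> Sp" if "(x + y) v \<noteq> 0" for v
  proof (cases "x v = 0")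
    case True then show ?thesis using that y by auto
  next
    case False then show ?thesis using x by auto
  qed
  then show "x + y \<in> {f. (\<forall>v. f v \<noteq> 0 \<longrightarrow> v \<in> Sp) \<and> (\<forall>a\<in>A. \<forall>v. f (v + a) = f v)}"
    using x y by auto
qed (auto simp: cscale_def)

lemma dim_Qcode:
  fixes Sp A :: "(nat \<Rightarrow> 'a::ab_group_add) set"
  assumes finSp: "finite Sp" and ASp: "A \<subseteq> Sp"
    and A0: "0 \<in> A" and Aadd: "\<And>x y. x \<in> A \<Longrightarrow> y \<in> A \<Longrightarrow> x + y \<in> A"
    and Aneg: "\<And>x. x \<in> A \<Longrightarrow> - x \<in> A"
    and Spadd: "\<And>x y. x \<in> Sp \<Longrightarrow> y \<in> Sp \<Longrightarrow> x + y \<in> Sp"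
  shows "vector_space.dim cscale (Qcode Sp A) * card A = card Sp"
proof -
  interpret cs: vector_space "cscale :: complex \<Rightarrow> ((nat \<Rightarrow> 'a) \<Rightarrow> complex) \<Rightarrow> _" by (rule vs_cscale)
  define cos where "cos v = (\<lambda>a. v + a) ` A" for v
  define K where "K = cos ` Sp"
  define ind where "ind X = (\<lambda>v::nat \<Rightarrow> 'a. if v \<in> X then (1::complex) else 0)" for X
  define Q where "Q = Qcode Sp A"
  have finA: "finite A" using finite_subset[OF ASp finSp] .
  have cos_sub: "cos v \<subseteq> Sp" if "v \<in> Sp" for v using that ASp Spadd by (auto simp: cos_def)
  have v_cos: "v \<in> cos v" for v using A0 by (force simp: cos_def)
  have mem_cos: "x \<in> cos v \<longleftrightarrow> x - v \<in> A" for x v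
    unfolding cos_def image_iff
  proof
    assume "\<exists>a\<in>A. x = v + a" then show "x - v \<in> A" by auto
  next
    assume "x - v \<in> A" then show "\<exists>a\<in>A. x = v + a" by (intro bexI[of _ "x - v"]) auto
  qed
  have cos_eq: "cos v = cos v'" if "v \<in> cos v'" for v v'
  proof -
    have d: "v - v' \<in> A" using that mem_cos by blast
    show ?thesis
    proof (rule set_eqI)
      fix x
      have "x - v' = (x - v) + (v - v')" by simp
      moreover have "x - v = (x - v') + - (v - v')" by simp
      ultimately show "x \<in> cos v \<longleftrightarrow> x \<in> cos v'" unfolding mem_cos using d Aadd Aneg by metis
    qed
  qed
  have card_cos: "card (cos v) = card A" for v
    unfolding cos_def by (rule card_image) (auto simp: inj_on_def)
  have finK: "finite K" unfolding K_def using finSp by simp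
  have UK: "\<Union>K = Sp" unfolding K_def using cos_sub v_cos by blast
  have disj: "\<And>c1 c2. c1 \<in> K \<Longrightarrow> c2 \<in> K \<Longrightarrow> c1 \<noteq> c2 \<Longrightarrow> c1 \<inter> c2 = {}"
    unfolding K_def using cos_eq by blast
  have cardK: "card A * card K = card Sp"
  proof -
    have "card A * card K = card (\<Union>K)"
      by (rule card_partition[OF finK _ _ disj]) (use card_cos in \<open>auto simp: UK finSp K_def finA cos_def\<close>)
    then show ?thesis using UK by simp
  qed
  define B where "B = ind ` K"
  have ind_inj: "inj_on ind K"
  proof (rule inj_onI)
    fix X Y assume "X \<in> K" "Y \<in> K" "ind X = ind Y"
    then show "X = Y" unfolding ind_def by (auto simp: fun_eq_iff) (metis one_neq_zero)+
  qed
  have cardB: "card B = card K" unfolding B_def using card_image[OF ind_inj] .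
  have finB: "finite B" unfolding B_def using finK by simp
  have KQ: "ind X \<in> Q" if XK: "X \<in> K" for X
  proof -
    obtain v where v: "v \<in> Sp" "X = cos v" using XK unfolding K_def by auto
    have "w + a \<in> X \<longleftrightarrow> w \<in> X" if "a \<in> A" for w a
    proof -
      have "(w + a) - v = (w - v) + a" "w - v = ((w + a) - v) + - a" by simp_all
      then show ?thesis unfolding v(2) mem_cos using that Aadd Aneg by metis
    qed
    then show ?thesis unfolding Q_def Qcode_def ind_def using cos_sub[OF v(1)] v(2) by auto
  qed
  have BQ: "B \<subseteq> Q" unfolding B_def using KQ by auto
  have QB: "Q \<subseteq> cs.span B"
  proof
    fix f assume fQ: "f \<in> Q"
    define rep where "rep X = (SOME v. v \<in> X)" for X :: "(nat \<Rightarrow> 'a) set"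
    have rep: "rep X \<in> X" if "X \<in> K" for X
      using that unfolding K_def rep_def by (auto intro: someI[of "\<lambda>v. v \<in> _", OF v_cos])
    have finv: "f (rep X) = f v" if "X \<in> K" "v \<in> X" for X v
    proof -
      obtain w where w: "X = cos w" using \<open>X \<in> K\<close> unfolding K_def by auto
      have "cos v = X" "cos (rep X) = X" using cos_eq rep[OF that(1)] that(2) w by blast+
      then have "rep X - v \<in> A" using mem_cos v_cos by metis
      then have "f (v + (rep X - v)) = f v" using fQ unfolding Q_def Qcode_def by blast
      then show ?thesis by simp
    qed
    have "f = (\<Sum>X\<in>K. cscale (f (rep X)) (ind X))"
    proof (rule ext)
      fix v
      have s: "(\<Sum>X\<in>K. cscale (f (rep X)) (ind X)) v = (\<Sum>X\<in>K. f (rep X) * ind X v)"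
        by (simp add: sum_apply_fun cscale_def)
      show "f v = (\<Sum>X\<in>K. cscale (f (rep X)) (ind X)) v"
      proof (cases "v \<in> Sp")
        case True
        have cK: "cos v \<in> K" using True unfolding K_def by auto
        have "(\<Sum>X\<in>K. f (rep X) * ind X v) = (\<Sum>X\<in>K. if X = cos v then f v else 0)"
        proof (rule sum.cong)
          fix X assume X: "X \<in> K"
          show "f (rep X) * ind X v = (if X = cos v then f v else 0)"
          proof (cases "v \<in> X")
            case True
            then have "X = cos v" using X cos_eq unfolding K_def by blast
            then show ?thesis using finv[OF X True] True by (simp add: ind_def)
          next
            case False
            then have "X \<noteq> cos v" using v_cos by blast
            then show ?thesis using False by (simp add: ind_def)
          qed
        qed simp
        also have "\<dots> = f v" using cK finK by (simp add: sum.delta')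
        finally show ?thesis using s by simp
      next
        case False
        then have "f v = 0" using fQ unfolding Q_def Qcode_def by auto
        moreover have "ind X v = 0" if "X \<in> K" for X
          using that False UK unfolding ind_def by auto
        ultimately show ?thesis using s by simp
      qed
    qed
    also have "\<dots> \<in> cs.span B"
      by (intro cs.span_sum cs.span_scale cs.span_base) (auto simp: B_def)
    finally show "f \<in> cs.span B" .
  qed
  have subQ: "cs.subspace Q" unfolding Q_def by (rule Qcode_subspace)
  have spanB: "cs.span B = Q" using cs.span_subspace[OF BQ QB subQ] .
  have indep: "cs.independent B"
  proof (rule cs.independent_if_scalars_zero[OF finB])
    fix g x assume z: "(\<Sum>x\<in>B. cscale (g x) x) = 0" and xB: "x \<in> B"
    obtain X where X: "X \<in> K" "x = ind X" using xB unfolding B_def by auto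
    obtain v where v: "v \<in> Sp" "X = cos v" using X(1) unfolding K_def by auto
    have "0 = (\<Sum>x\<in>B. cscale (g x) x) v" using z by simp
    also have "\<dots> = (\<Sum>Y\<in>K. g (ind Y) * ind Y v)"
      unfolding B_def sum_apply_fun by (simp add: sum.reindex[OF ind_inj] cscale_def)
    also have "\<dots> = (\<Sum>Y\<in>K. if Y = X then g (ind X) else 0)"
    proof (rule sum.cong)
      fix Y assume Y: "Y \<in> K"
      show "g (ind Y) * ind Y v = (if Y = X then g (ind X) else 0)"
      proof (cases "v \<in> Y")
        case True
        then have "Y = X" using Y v cos_eq unfolding K_def by blast
        then show ?thesis using True by (simp add: ind_def)
      next
        case False
        then have "Y \<noteq> X" using v v_cos by blast
        then show ?thesis using False by (simp add: ind_def)
      qed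
    qed simp
    also have "\<dots> = g (ind X)" using X(1) finK by (simp add: sum.delta')
    finally show "g x = 0" using X by simp
  qed
  have sQ: "cs.span Q = Q" using subQ by (rule cs.span_eq_iff[THEN iffD2])
  have "cs.span B = cs.span Q" unfolding spanB sQ ..
  then have "cs.dim Q = card B" using indep by (rule cs.dim_eq_card)
  then show ?thesis using cardK cardB unfolding Q_def by (simp add: mult.commute)
qed


lemma wt_zero_arith: "w \<le> 2 * ((d - 1) div 2) \<Longrightarrow> d \<le> w \<Longrightarrow> w = (0::nat)"
  by presburger

lemma wt_0_imp: "x \<in> words n \<Longrightarrow> wt x = 0 \<Longrightarrow> x = 0"
  using supp_finite[of x n] unfolding wt_def by (auto simp: fun_eq_iff)

lemma words_diff: fixes x y :: "nat \<Rightarrow> 'a::ab_group_add" shows "x \<in> words n \<Longrightarrow> y \<in> words n \<Longrightarrow> x - y \<in> words n"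
  by (auto simp: words_def)

lemma words_add: fixes x y :: "nat \<Rightarrow> 'a::ab_group_add" shows "x \<in> words n \<Longrightarrow> y \<in> words n \<Longrightarrow> x + y \<in> words n"
  by (auto simp: words_def)

lemma wt_diff: "x \<in> words n \<Longrightarrow> y \<in> words n \<Longrightarrow> wt (x - y) \<le> wt x + wt (y :: nat \<Rightarrow> 'a::ab_group_add)"
  using wt_triangle[of x n "- y"] by (simp add: wt_neg words_def)

lemma inner_formula:
  fixes a1 a2 b1 b2 :: "nat \<Rightarrow> 'a::{finite,field}"
  assumes a1: "a1 \<in> words N"
  shows "cinner N (Xop a1 (Zop N b1 u)) (Xop a2 (Zop N b2 w)) =
    chi (dotp N b2 (a1 - a2)) * (\<Sum>v\<in>words N. chi (dotp N (b2 - b1) v) * (cnj (u v) * w (v + (a1 - a2))))"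
proof -
  let ?W = "words N :: (nat \<Rightarrow> 'a) set"
  let ?G = "\<lambda>v. cnj (chi (dotp N b1 (v - a1)) * u (v - a1)) * (chi (dotp N b2 (v - a2)) * w (v - a2))"
  have bij: "bij_betw (\<lambda>v. v + a1) ?W ?W"
  proof (rule bij_betwI[where g = "\<lambda>v. v - a1"])
    show "(\<lambda>v. v + a1) \<in> ?W \<rightarrow> ?W" using a1 words_add by blast
    show "(\<lambda>v. v - a1) \<in> ?W \<rightarrow> ?W" using a1 words_diff by blast
  qed auto
  have "cinner N (Xop a1 (Zop N b1 u)) (Xop a2 (Zop N b2 w)) = (\<Sum>v\<in>?W. ?G v)"
    unfolding cinner_def Xop_def Zop_def by simp
  also have "\<dots> = (\<Sum>v\<in>?W. ?G (v + a1))"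
    using sum.reindex_bij_betw[OF bij, of ?G] by simp
  also have "\<dots> = (\<Sum>v\<in>?W. chi (dotp N b2 (a1 - a2)) * (chi (dotp N (b2 - b1) v) * (cnj (u v) * w (v + (a1 - a2)))))"
  proof (rule sum.cong)
    fix v :: "nat \<Rightarrow> 'a"
    have e1: "v + a1 - a1 = v" by simp
    have e2: "v + a1 - a2 = v + (a1 - a2)" by (simp add: algebra_simps)
    have c1: "cnj (chi (dotp N b1 v)) = chi (- dotp N b1 v)" by (rule chi_neg)
    have c2: "chi (dotp N b2 (v + (a1 - a2))) = chi (dotp N b2 v) * chi (dotp N b2 (a1 - a2))"
      by (simp add: dotp_add_right chi_add)
    have c3: "chi (- dotp N b1 v) * chi (dotp N b2 v) = chi (dotp N (b2 - b1) v)"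
      by (simp add: chi_add[symmetric] dotp_diff_left dotp_comm[of N b1 v] dotp_comm[of N b2 v])
    show "?G (v + a1) = chi (dotp N b2 (a1 - a2)) * (chi (dotp N (b2 - b1) v) * (cnj (u v) * w (v + (a1 - a2))))"
      unfolding e1 e2 complex_cnj_mult c1 c2 c3[symmetric] by (simp add: ac_simps)
  qed simp
  also have "\<dots> = chi (dotp N b2 (a1 - a2)) * (\<Sum>v\<in>?W. chi (dotp N (b2 - b1) v) * (cnj (u v) * w (v + (a1 - a2))))"
    by (simp add: sum_distrib_left)
  finally show ?thesis .
qed


lemma dual_anti: "S \<subseteq> D \<Longrightarrow> dual N D \<subseteq> dual N S"
  by (auto simp: dual_def)

lemma KL_Q:
  fixes S D :: "(nat \<Rightarrow> 'a::{finite,field}) set"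
  assumes lS: "linear_code N S" and lD: "linear_code N D" and SD: "S \<subseteq> D"
    and hz: "\<And>b. b \<in> D \<Longrightarrow> b \<notin> S \<Longrightarrow> dz \<le> wt b"
    and hx: "\<And>a. a \<in> dual N S \<Longrightarrow> a \<noteq> 0 \<Longrightarrow> dx \<le> wt a"
  shows "corrects N (Qcode (dual N S) (dual N D)) (errors N ((dx - 1) div 2) ((dz - 1) div 2))"
  unfolding corrects_def
proof (intro ballI)
  let ?W = "words N :: (nat \<Rightarrow> 'a) set"
  let ?Sp = "dual N S" and ?A = "dual N D"
  let ?Q = "Qcode ?Sp ?A"
  have ASp: "?A \<subseteq> ?Sp" using dual_anti[OF SD] .
  have lA: "linear_code N ?A" by (rule linear_code_dual)
  have subA: "module.subspace vscale ?A" using lA by (simp add: linear_code_def)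
  have A0: "0 \<in> ?A" using subA by (simp add: subspace_iff)
  have S0: "0 \<in> S" using lS by (simp add: linear_code_def subspace_iff)
  have AW: "?A \<subseteq> ?W" and SpW: "?Sp \<subseteq> ?W" by (auto simp: dual_def)
  have dA: "dual N ?A = D" by (rule dual_dual[OF lD])
  have finW: "finite ?W" by (rule finite_words)
  fix e1 e2 :: "((nat \<Rightarrow> 'a) \<Rightarrow> complex) \<Rightarrow> ((nat \<Rightarrow> 'a) \<Rightarrow> complex)" assume e1: "e1 \<in> errors N ((dx - 1) div 2) ((dz - 1) div 2)"
    and e2: "e2 \<in> errors N ((dx - 1) div 2) ((dz - 1) div 2)"
  obtain a1 b1 where ab1: "e1 = (\<lambda>f. Xop a1 (Zop N b1 f))" "a1 \<in> ?W" "b1 \<in> ?W"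
    "wt a1 \<le> (dx - 1) div 2" "wt b1 \<le> (dz - 1) div 2"
    using e1 unfolding errors_def by blast
  obtain a2 b2 where ab2: "e2 = (\<lambda>f. Xop a2 (Zop N b2 f))" "a2 \<in> ?W" "b2 \<in> ?W"
    "wt a2 \<le> (dx - 1) div 2" "wt b2 \<le> (dz - 1) div 2"
    using e2 unfolding errors_def by blast
  define a where "a = a1 - a2"
  define b where "b = b2 - b1"
  have aW: "a \<in> ?W" unfolding a_def using words_diff ab1 ab2 by blast
  have bW: "b \<in> ?W" unfolding b_def using words_diff ab1 ab2 by blast
  have wa: "wt a \<le> 2 * ((dx - 1) div 2)" unfolding a_def using wt_diff[OF ab1(2) ab2(2)] ab1(4) ab2(4) by simp
  have wb: "wt b \<le> 2 * ((dz - 1) div 2)" unfolding b_def using wt_diff[OF ab2(3) ab1(3)] ab1(5) ab2(5) by simp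
  have form: "cinner N (e1 u) (e2 w) = chi (dotp N b2 a) * (\<Sum>v\<in>?W. chi (dotp N b v) * (cnj (u v) * w (v + a)))" for u w
    unfolding ab1(1) ab2(1) a_def b_def by (rule inner_formula[OF ab1(2)])
  show "\<exists>c. \<forall>u\<in>?Q. \<forall>w\<in>?Q. cinner N (e1 u) (e2 w) = c * cinner N u w"
  proof (cases "a \<in> ?Sp")
    case False
    then obtain s where s: "s \<in> S" "dotp N s a \<noteq> 0" using aW by (auto simp: dual_def)
    show ?thesis
    proof (intro exI[of _ 0] ballI)
      fix u w assume u: "u \<in> ?Q" and w: "w \<in> ?Q"
      have "(\<Sum>v\<in>?W. chi (dotp N b v) * (cnj (u v) * w (v + a))) = 0"
      proof (rule sum.neutral, rule ballI)
        fix v assume "v \<in> ?W"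
        show "chi (dotp N b v) * (cnj (u v) * w (v + a)) = 0"
        proof (cases "u v = 0")
          case False
          then have "v \<in> ?Sp" using u unfolding Qcode_def by auto
          then have "dotp N s v = 0" using s(1) by (auto simp: dual_def)
          then have "dotp N s (v + a) \<noteq> 0" using s(2) by (simp add: dotp_add_right)
          then have "v + a \<notin> ?Sp" using s(1) by (auto simp: dual_def)
          then have "w (v + a) = 0" using w unfolding Qcode_def by auto
          then show ?thesis by simp
        qed simp
      qed
      then show "cinner N (e1 u) (e2 w) = 0 * cinner N u w" using form by simp
    qed
  next
    case aSp: True
    show ?thesis
    proof (cases "a \<in> ?A")
      case False
      then have "a \<noteq> 0" using A0 by auto
      then have "dx \<le> wt a" using hx aSp by blast
      then have "wt a = 0" using wa wt_zero_arith by blast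
      then have "a = 0" using wt_0_imp aW by blast
      then show ?thesis using \<open>a \<noteq> 0\<close> by simp
    next
      case aA: True
      have winv: "w (v + a) = w v" if "w \<in> ?Q" for w v using that aA unfolding Qcode_def by blast
      show ?thesis
      proof (cases "\<exists>a0\<in>?A. dotp N b a0 \<noteq> 0")
        case True
        then obtain a0 where a0: "a0 \<in> ?A" "dotp N b a0 \<noteq> 0" by blast
        show ?thesis
        proof (intro exI[of _ 0] ballI)
          fix u w assume u: "u \<in> ?Q" and w: "w \<in> ?Q"
          have "(\<Sum>v\<in>?W. chi (dotp N b v) * (cnj (u v) * w (v + a))) = (\<Sum>v\<in>?W. chi (dotp N b v) * (cnj (u v) * w v))"
            using winv[OF w] by simp
          also have "\<dots> = 0"
          proof (rule char_sum_zero[OF finW _ subA _ a0])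
            show "v + x \<in> ?W" if "x \<in> ?A" "v \<in> ?W" for x v using that AW words_add by blast
            show "cnj (u (v + x)) * w (v + x) = cnj (u v) * w v" if "x \<in> ?A" for x v
              using that u w unfolding Qcode_def by auto
          qed
          finally show "cinner N (e1 u) (e2 w) = 0 * cinner N u w" using form by simp
        qed
      next
        case False
        then have "b \<in> dual N ?A" using bW by (auto simp: dual_def dotp_comm)
        then have bD: "b \<in> D" using dA by simp
        have bS: "b \<in> S"
        proof (rule ccontr)
          assume nb: "b \<notin> S"
          then have "dz \<le> wt b" using hz bD by blast
          then have "wt b = 0" using wb wt_zero_arith by blast
          then have "b = 0" using wt_0_imp bW by blast
          then show False using nb S0 by simp
        qed
        show ?thesis
        proof (intro exI[of _ "chi (dotp N b2 a)"] ballI)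
          fix u w assume u: "u \<in> ?Q" and w: "w \<in> ?Q"
          have "(\<Sum>v\<in>?W. chi (dotp N b v) * (cnj (u v) * w (v + a))) = (\<Sum>v\<in>?W. cnj (u v) * w v)"
          proof (rule sum.cong)
            fix v assume "v \<in> ?W"
            show "chi (dotp N b v) * (cnj (u v) * w (v + a)) = cnj (u v) * w v"
            proof (cases "u v = 0")
              case False
              then have "v \<in> ?Sp" using u unfolding Qcode_def by auto
              then have "dotp N b v = 0" using bS by (auto simp: dual_def)
              then show ?thesis using winv[OF w] by (simp add: chi_0)
            qed simp
          qed simp
          then show "cinner N (e1 u) (e2 w) = chi (dotp N b2 a) * cinner N u w"
            using form by (simp add: cinner_def)
        qed
      qed
    qed
  qed
qed


lemma card_ge2: "2 \<le> CARD('a::{finite,field})"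
proof -
  have "card {0::'a, 1} = 2" by simp
  moreover have "card {0::'a, 1} \<le> CARD('a)" by (rule card_mono) auto
  ultimately show ?thesis by simp
qed

lemma dim_le:
  fixes C C' :: "(nat \<Rightarrow> 'a::{finite,field}) set"
  assumes "linear_code n C" "linear_code n C'" "C' \<subseteq> C"
  shows "code_dim C' \<le> code_dim C"
proof -
  have "card C' \<le> card C" by (rule card_mono[OF card_linear_code(2)[OF assms(1)] assms(3)])
  then have "CARD('a) ^ code_dim C' \<le> CARD('a) ^ code_dim C"
    using card_linear_code(1)[OF assms(1)] card_linear_code(1)[OF assms(2)] by simp
  then show ?thesis using card_ge2[where 'a='a] by (simp add: power_le_imp_le_exp)
qed

theorem theorem9:
  fixes C1 C2 C3 C4 :: "(nat \<Rightarrow> 'a::{finite,field}) set"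
    and n k1 k2 k3 k4 d1 d2 d3 d4 :: nat
  assumes "linear_code n C1" "code_dim C1 = k1" "min_dist C1 = d1"
      and "linear_code n C2" "code_dim C2 = k2" "min_dist C2 = d2"
      and "C2 \<subset> C1"
      and "linear_code n C3" "code_dim C3 = k3" "min_dist C3 = d3"
      and "linear_code n C4" "code_dim C4 = k4" "min_dist C4 = d4"
      and "C4 \<subset> C3"
  shows "\<exists>(Q :: ((nat \<Rightarrow> 'a) \<Rightarrow> complex) set) dz dx. is_AQECC (2 * n) ((k1 - k2) + (k3 - k4)) dz dx Q
           \<and> dz \<ge> min (2 * d1) d3
           \<and> dx \<ge> min (2 * min_dist (dual n C4)) (min_dist (dual n C2))"
proof -
  note l1 = assms(1) and l2 = assms(4) and l3 = assms(8) and l4 = assms(11)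
  define N where "N = n + n"
  have N2: "2 * n = N" unfolding N_def by simp
  define D where "D = uuv n C1 C3"
  define S where "S = uuv n C2 C4"
  define dz where "dz = min (2 * d1) d3"
  define dx where "dx = min (2 * min_dist (dual n C4)) (min_dist (dual n C2))"
  define Sp where "Sp = dual N S"
  define A where "A = dual N D"
  define Q where "Q = Qcode Sp A"
  let ?q = "CARD('a)"
  have lD: "linear_code N D" unfolding N_def D_def by (rule linear_code_uuv[OF l1 l3])
  have lS: "linear_code N S" unfolding N_def S_def by (rule linear_code_uuv[OF l2 l4])
  have SD: "S \<subseteq> D" unfolding S_def D_def using assms(7,14) by (intro uuv_mono) auto
  have S0: "0 \<in> S" using lS by (simp add: linear_code_def subspace_iff)
  have hz: "dz \<le> wt b" if "b \<in> D" "b \<notin> S" for b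
  proof -
    have "b \<noteq> 0" using that S0 by auto
    then show ?thesis using wt_uuv[OF l1 l3, of b] that assms(3,10) unfolding dz_def D_def by simp
  qed
  have hx: "dx \<le> wt a" if "a \<in> dual N S" "a \<noteq> 0" for a
    using wt_dual_uuv[OF l2 l4, of a] that unfolding dx_def S_def N_def by simp
  have KL: "corrects N Q (errors N ((dx - 1) div 2) ((dz - 1) div 2))"
    unfolding Q_def Sp_def A_def by (rule KL_Q[OF lS lD SD hz hx])
  have lSp: "linear_code N Sp" and lA: "linear_code N A" unfolding Sp_def A_def by (rule linear_code_dual)+
  have finSp: "finite Sp" using card_linear_code(2)[OF lSp] .
  have finA: "finite A" using card_linear_code(2)[OF lA] .
  have ASp: "A \<subseteq> Sp" unfolding A_def Sp_def using dual_anti[OF SD] .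
  have subA: "module.subspace vscale A" and subSp: "module.subspace vscale Sp"
    using lA lSp by (simp_all add: linear_code_def)
  have dimeq: "vector_space.dim cscale Q * card A = card Sp"
    unfolding Q_def
    by (rule dim_Qcode[OF finSp ASp]) (use subA subSp subspace_neg in \<open>auto simp: subspace_iff\<close>)
  have cA: "card D * card A = ?q ^ N" unfolding A_def by (rule card_dual[OF lD])
  have cSp: "card S * card Sp = ?q ^ N" unfolding Sp_def by (rule card_dual[OF lS])
  have C1w: "C1 \<subseteq> words n" and C2w: "C2 \<subseteq> words n" using l1 l2 by (auto simp: linear_code_def)
  have cD: "card D = ?q ^ (k1 + k3)"
    unfolding D_def card_uuv[OF C1w] using card_linear_code(1)[OF l1] card_linear_code(1)[OF l3] assms(2,9)
    by (simp add: power_add)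
  have cS: "card S = ?q ^ (k2 + k4)"
    unfolding S_def card_uuv[OF C2w] using card_linear_code(1)[OF l2] card_linear_code(1)[OF l4] assms(5,12)
    by (simp add: power_add)
  have k21: "k2 \<le> k1" using dim_le[OF l1 l2] assms(2,5,7) by auto
  have k43: "k4 \<le> k3" using dim_le[OF l3 l4] assms(9,12,14) by auto
  have Apos: "card A > 0" using finA lA by (auto simp: linear_code_def subspace_iff card_gt_0_iff)
  have qpos: "?q > 0" by simp
  define m where "m = (k1 - k2) + (k3 - k4)"
  have ksum: "k1 + k3 = (k2 + k4) + m" unfolding m_def using k21 k43 by simp
  define dm where "dm = vector_space.dim cscale Q"
  have "dm * card A * ?q ^ (k2 + k4) = ?q ^ N" using dimeq cSp cS unfolding dm_def by (simp add: mult.commute)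
  also have "\<dots> = card A * ?q ^ (k2 + k4) * ?q ^ m" using cA cD ksum by (simp add: power_add mult.commute mult.left_commute)
  finally have "dm * (card A * ?q ^ (k2 + k4)) = ?q ^ m * (card A * ?q ^ (k2 + k4))"
    by (simp add: ac_simps)
  moreover have "card A * ?q ^ (k2 + k4) > 0" using Apos qpos by simp
  ultimately have dmv: "dm = ?q ^ m" by simp
  have Qh: "Q \<subseteq> hspace N"
    using lSp unfolding Q_def Qcode_def hspace_def linear_code_def by auto
  have "is_AQECC N m dz dx Q"
    unfolding is_AQECC_def using Qh KL dmv Qcode_subspace unfolding dm_def Q_def by simp
  then show ?thesis unfolding N2[symmetric] m_def dz_def dx_def by auto
qed


end
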